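(* For $n\in\mathbb{N}$ and $0<x<1$, let $A(n,x)=(-1)^{n+1}\sum_{m=1}^{\infty}\cos(2\pi m x)\sum_{r=0}^{n-1}\frac{(n+r)!}{(n-r-1)!}\frac{1}{(2\pi m)^{2r+2}}$. Then \[ A(n,x)=(-1)^{n}\pi\sum_{m=1}^{\infty}Y_{2n}(4\pi m)\cos(2\pi m x)+(-1)^{n+1}\sum_{m=1}^{\infty}\Big\{2(\gamma+\log(2\pi m))J_{2n}(4\pi m)+P_{2n}(4\pi m)-2Q_{2n}(4\pi m)\Big\}\cos(2\pi m x), \] both series on the right converging.
   Context: $\gamma$ is Euler's constant, $\psi=\Gamma'/\Gamma$, $J_k$ and $Y_k$ are the Bessel functions of the first and second kind of integer order $k$. For $k\in\mathbb{N}$ and $z>0$, $P_{k}(z)=-\sum_{\lceil k/2\rceil\le r\le k-1}\frac{(k-r-1)!}{r!}\left(\frac z2\right)^{2r-k}+\sum_{\ell=0}^{\infty}(-1)^{\ell}\left(\frac z2\right)^{k+2\ell}\frac{\psi(k+\ell+1)-\psi(\ell+1)}{\ell!\,(k+\ell)!}$ and $Q_{k}(z)=\sum_{\ell=0}^{\infty}(-1)^{\ell}\left(\frac z2\right)^{k+2\ell}\frac{\psi(k+\ell+1)+\gamma}{\ell!\,(k+\ell)!}$. *)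

theory Defs
  imports "HOL-Analysis.Analysis"
begin

definition besselJ :: "nat \<Rightarrow> real \<Rightarrow> real" where
  "besselJ k z = (\<Sum>l. (-1)^l * (z/2)^(k + 2*l) / (fact l * fact (k + l)))"

text \<open>Bessel function of the second kind of integer order k (standard series, DLMF 10.8.1).\<close>
definition besselY :: "nat \<Rightarrow> real \<Rightarrow> real" where
  "besselY k z =
     (2 / pi) * ln (z/2) * besselJ k z
     - (1 / pi) * (\<Sum>r<k. fact (k - r - 1) / fact r * (z/2) powi (2 * int r - int k))
     - (1 / pi) * (\<Sum>l. (-1)^l * (z/2)^(k + 2*l) *
          (Digamma (real l + 1) + Digamma (real (k + l) + 1)) / (fact l * fact (k + l)))"

definition P_fun :: "nat \<Rightarrow> real \<Rightarrow> real" where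
  "P_fun k z =
     - (\<Sum>r\<in>{(k + 1) div 2 ..< k}. fact (k - r - 1) / fact r * (z/2)^(2*r - k))
     + (\<Sum>l. (-1)^l * (z/2)^(k + 2*l) *
          (Digamma (real (k + l) + 1) - Digamma (real l + 1)) / (fact l * fact (k + l)))"

definition Q_fun :: "nat \<Rightarrow> real \<Rightarrow> real" where
  "Q_fun k z =
     (\<Sum>l. (-1)^l * (z/2)^(k + 2*l) *
          (Digamma (real (k + l) + 1) + euler_mascheroni) / (fact l * fact (k + l)))"

definition A_fun :: "nat \<Rightarrow> real \<Rightarrow> real" where
  "A_fun n x = (-1)^(n+1) * (\<Sum>m. cos (2*pi*real (Suc m)*x) *
      (\<Sum>r<n. fact (n + r) / fact (n - r - 1) * (1 / (2*pi*real (Suc m))^(2*r+2))))"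

end

theory Submission
  imports Defs "HOL-Real_Asymp.Real_Asymp"
begin


definition ES :: "(nat \<Rightarrow> real) \<Rightarrow> bool" where
  "ES c \<longleftrightarrow> (\<forall>w. summable (\<lambda>l. c l * w^l))"

definition PS :: "(nat \<Rightarrow> real) \<Rightarrow> real \<Rightarrow> real" where
  "PS c w = (\<Sum>l. c l * w^l)"

definition Fk :: "nat \<Rightarrow> (nat \<Rightarrow> real) \<Rightarrow> real \<Rightarrow> real" where
  "Fk k c z = (z/2)^k * PS c (z^2/4)"

lemma ES_abs: assumes "ES c" shows "summable (\<lambda>l. \<bar>c l * w^l\<bar>)"
proof -
  have "summable (\<lambda>l. c l * (\<bar>w\<bar>+1)^l)" using assms by (simp add: ES_def)
  from powser_insidea[OF this, of w] show ?thesis by simp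
qed

lemma ES_comp: assumes "ES c" "\<And>l. \<bar>d l\<bar> \<le> \<bar>c l\<bar>" shows "ES d"
  unfolding ES_def
proof
  fix w
  show "summable (\<lambda>l. d l * w^l)"
  proof (rule summable_comparison_test[OF _ ES_abs[OF assms(1), of w]])
    show "\<exists>N. \<forall>n\<ge>N. norm (d n * w ^ n) \<le> \<bar>c n * w ^ n\<bar>"
      using assms(2) by (auto simp: abs_mult intro!: mult_right_mono)
  qed
qed

lemma ES_add: "ES c \<Longrightarrow> ES d \<Longrightarrow> ES (\<lambda>l. c l + d l)"
  unfolding ES_def by (auto simp: distrib_right intro: summable_add)

lemma ES_scale: "ES c \<Longrightarrow> ES (\<lambda>l. a * c l)"
  unfolding ES_def by (auto simp: mult.assoc intro: summable_mult)

lemma ES_exp: "ES (\<lambda>l. inverse (fact l))"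
  unfolding ES_def using summable_exp by auto

lemma PS_add: "ES c \<Longrightarrow> ES d \<Longrightarrow> PS (\<lambda>l. c l + d l) w = PS c w + PS d w"
  unfolding ES_def PS_def by (simp add: distrib_right suminf_add)

lemma PS_scale: "ES c \<Longrightarrow> PS (\<lambda>l. a * c l) w = a * PS c w"
  unfolding ES_def PS_def by (simp add: mult.assoc suminf_mult)

definition sh :: "(nat \<Rightarrow> real) \<Rightarrow> nat \<Rightarrow> real" where
  "sh c l = (if l = 0 then 0 else c (l - 1))"

lemma sh_sums: assumes "ES c" shows "(\<lambda>l. sh c l * w^l) sums (w * PS c w)"
proof -
  have "(\<lambda>l. w * (c l * w^l)) sums (w * PS c w)"
    using assms unfolding ES_def PS_def by (intro sums_mult summable_sums) auto
  then have "(\<lambda>l. sh c (Suc l) * w^(Suc l)) sums (w * PS c w)"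
    by (simp add: sh_def mult_ac)
  from sums_Suc_iff[where f="\<lambda>l. sh c l * w^l", THEN iffD1, OF this] show ?thesis by (simp add: sh_def)
qed

lemma ES_sh: "ES c \<Longrightarrow> ES (sh c)"
  using sh_sums unfolding ES_def by (blast intro: sums_summable)

lemma PS_sh: "ES c \<Longrightarrow> PS (sh c) w = w * PS c w"
  using sh_sums unfolding PS_def by (blast intro: sums_unique[symmetric])

lemma diffs_sums: assumes "ES c"
  shows "(\<lambda>l. real l * c l * w^l) sums (w * (\<Sum>l. diffs c l * w^l))"
proof -
  have s: "summable (\<lambda>l. diffs c l * w^l)" using assms termdiff_converges_all unfolding ES_def by blast
  have "(\<lambda>l. w * (diffs c l * w^l)) sums (w * (\<Sum>l. diffs c l * w^l))"
    using s by (intro sums_mult summable_sums)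
  then have "(\<lambda>l. real (Suc l) * c (Suc l) * w^(Suc l)) sums (w * (\<Sum>l. diffs c l * w^l))"
    by (simp add: diffs_def mult_ac)
  from sums_Suc_iff[where f="\<lambda>l. real l * c l * w^l", THEN iffD1, OF this] show ?thesis by simp
qed

lemma ES_theta: assumes "ES c" shows "ES (\<lambda>l. (real k + 2 * real l) * c l)"
proof -
  have "ES (\<lambda>l. real l * c l)" unfolding ES_def
    using diffs_sums[OF assms] by (auto intro: sums_summable simp: mult.assoc)
  then have "ES (\<lambda>l. real k * c l + 2 * (real l * c l))"
    by (intro ES_add ES_scale assms)
  then show ?thesis by (simp add: distrib_right mult.assoc)
qed

lemma PS_theta: assumes "ES c"
  shows "PS (\<lambda>l. (real k + 2 * real l) * c l) w = real k * PS c w + 2 * w * (\<Sum>l. diffs c l * w^l)"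
proof -
  have A: "(\<lambda>l. real k * (c l * w^l)) sums (real k * PS c w)"
    using assms unfolding ES_def PS_def by (intro sums_mult summable_sums) auto
  have B: "(\<lambda>l. 2 * (real l * c l * w^l)) sums (2 * (w * (\<Sum>l. diffs c l * w^l)))"
    by (intro sums_mult diffs_sums assms)
  have "(\<lambda>l. (real k + 2 * real l) * c l * w^l) sums (real k * PS c w + 2 * (w * (\<Sum>l. diffs c l * w^l)))"
    using sums_add[OF A B] by (simp add: algebra_simps)
  then show ?thesis unfolding PS_def by (simp add: sums_unique[symmetric] mult_ac)
qed

lemma Fk_deriv: assumes "ES c" "z > 0"
  shows "(Fk k c has_real_derivative Fk k (\<lambda>l. (real k + 2 * real l) * c l) z / z) (at z)"
proof -
  define S' where "S' = (\<lambda>w. \<Sum>l. diffs c l * w^l)"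
  have dS: "\<And>w. (PS c has_real_derivative S' w) (at w)"
    unfolding PS_def S'_def using assms(1) unfolding ES_def
    by (intro termdiffs_strong_converges_everywhere) auto
  have d1: "((\<lambda>z. PS c (z^2/4)) has_real_derivative S' (z^2/4) * (2*z/4)) (at z)"
    by (rule DERIV_chain2[OF dS]) (auto intro!: derivative_eq_intros)
  have d2: "((\<lambda>z. (z/2)^k) has_real_derivative real k * (z/2)^(k-1) * (1/2)) (at z)"
    by (auto intro!: derivative_eq_intros)
  have "(Fk k c has_real_derivative real k * (z/2)^(k-1) * (1/2) * PS c (z^2/4) + S' (z^2/4) * (2*z/4) * (z/2)^k) (at z)"
    using DERIV_mult[OF d2 d1] by (simp only: Fk_def[abs_def])
  moreover have "real k * (z/2)^(k-1) * (1/2) * PS c (z^2/4) + S' (z^2/4) * (2*z/4) * (z/2)^k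
     = Fk k (\<lambda>l. (real k + 2 * real l) * c l) z / z"
  proof (cases k)
    case 0
    then show ?thesis using assms(2) unfolding Fk_def PS_theta[OF assms(1)] S'_def
      by (simp add: field_simps power2_eq_square)
  next
    case (Suc j)
    then show ?thesis using assms(2) unfolding Fk_def PS_theta[OF assms(1)] S'_def
      by (simp add: field_simps power2_eq_square)
  qed
  ultimately show ?thesis by (rule DERIV_cong)
qed



definition jc :: "nat \<Rightarrow> nat \<Rightarrow> real" where
  "jc k l = (-1)^l / (fact l * fact (k+l))"
definition gc :: "nat \<Rightarrow> nat \<Rightarrow> real" where
  "gc k l = (-1)^l * (Digamma (real l + 1) + Digamma (real (k+l) + 1)) / (fact l * fact (k+l))"
definition th :: "nat \<Rightarrow> (nat \<Rightarrow> real) \<Rightarrow> nat \<Rightarrow> real" where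
  "th k c l = (real k + 2 * real l) * c l"

lemma Digamma_bound: "\<bar>Digamma (real l + 1)\<bar> \<le> real l + 1"
proof (induction l)
  case 0
  then show ?case using euler_mascheroni_pos euler_mascheroni_less_13_over_22 by simp
next
  case (Suc l)
  have "Digamma (real (Suc l) + 1) = Digamma (real l + 1) + 1 / (real l + 1)"
    using Digamma_plus1[of "real l + 1"] by (simp add: add.commute add.left_commute)
  moreover have "1 / (real l + 1) \<le> 1" by (simp add: field_simps)
  moreover have "0 \<le> 1 / (real l + 1)" by simp
  moreover have "\<bar>Digamma (real l + 1) + 1 / (real l + 1)\<bar> \<le> \<bar>Digamma (real l + 1)\<bar> + \<bar>1 / (real l + 1)\<bar>"
    by (rule abs_triangle_ineq)
  ultimately have "\<bar>Digamma (real (Suc l) + 1)\<bar> \<le> real l + 1 + 1" using Suc.IH by linarith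
  then show ?case by simp
qed

lemma Digamma_step: "Digamma (real (Suc m) + 1) = Digamma (real m + 1) + 1 / (real m + 1)"
  using Digamma_plus1[of "real m + 1"] by (simp add: add.commute add.left_commute)

lemma ES_jc: "ES (jc k)"
proof (rule ES_comp[OF ES_exp])
  fix l
  have "1 \<le> (fact (k+l) :: real)" by simp
  then have "1 / (fact l * fact (k+l)) \<le> 1 / (fact l :: real)"
    by (intro divide_left_mono) (auto intro!: mult_pos_pos simp: fact_ge_1)
  then show "\<bar>jc k l\<bar> \<le> \<bar>inverse (fact l)\<bar>"
    by (simp add: jc_def abs_mult field_simps)
qed

lemma ES_gc: "ES (gc k)"
proof (rule ES_comp)
  show "ES (\<lambda>l. th k (\<lambda>l. inverse (fact l)) l + 2 * inverse (fact l))"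
    unfolding th_def by (intro ES_add ES_scale ES_theta ES_exp)
  fix l
  have f1: "1 \<le> (fact (k+l) :: real)" by simp
  have d: "\<bar>Digamma (real l + 1) + Digamma (real (k+l) + 1)\<bar> \<le> real k + 2 * real l + 2"
    using Digamma_bound[of l] Digamma_bound[of "k+l"] by simp
  have "\<bar>gc k l\<bar> = \<bar>Digamma (real l + 1) + Digamma (real (k+l) + 1)\<bar> / (fact l * fact (k+l))"
    by (simp add: gc_def abs_mult)
  also have "\<dots> \<le> (real k + 2 * real l + 2) / (fact l * fact (k+l))"
    by (intro divide_right_mono d) simp
  also have "\<dots> \<le> (real k + 2 * real l + 2) / fact l"
    using f1 by (intro divide_left_mono) (auto intro!: mult_pos_pos)
  also have "\<dots> = th k (\<lambda>l. inverse (fact l)) l + 2 * inverse (fact l)"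
    by (simp add: th_def field_simps)
  also have "\<dots> \<le> \<bar>th k (\<lambda>l. inverse (fact l)) l + 2 * inverse (fact l)\<bar>" by simp
  finally show "\<bar>gc k l\<bar> \<le> \<bar>th k (\<lambda>l. inverse (fact l)) l + 2 * inverse (fact l)\<bar>" .
qed

lemma ES_th: "ES c \<Longrightarrow> ES (th k c)"
  unfolding th_def by (rule ES_theta)

lemma Fk_deriv': "ES c \<Longrightarrow> z > 0 \<Longrightarrow> (Fk k c has_real_derivative Fk k (th k c) z / z) (at z)"
  unfolding th_def by (rule Fk_deriv)

lemma alg_g: fixes K M N F G s a b :: real
  assumes "M > 0" "N > 0" "F > 0" "G > 0" "N = K + M"
  shows "(K + 2*M) * ((K + 2*M) * (-s * (a + 1/M + (b + 1/N)) / (M*F*(N*G))))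
     = K^2 * (-s * (a + 1/M + (b + 1/N)) / (M*F*(N*G))) + (-4) * (s * (a+b) / (F*G))
       + 4 * ((K + 2*M) * (-s / (M*F*(N*G))))"
proof -
  have K: "K = N - M" using assms by simp
  show ?thesis unfolding K using assms(1-4)
    by (simp add: field_simps power2_eq_square)
qed

lemma alg_j: fixes K M N F G s :: real
  assumes "M > 0" "N > 0" "F > 0" "G > 0" "N = K + M"
  shows "(K + 2*M) * ((K + 2*M) * (-s / (M*F*(N*G))))
     = K^2 * (-s / (M*F*(N*G))) + (-4) * (s / (F*G))"
proof -
  have K: "K = N - M" using assms by simp
  show ?thesis unfolding K using assms(1-4)
    by (simp add: field_simps power2_eq_square)
qed

lemma coef_jc: "th k (th k (jc k)) l = real k ^ 2 * jc k l + (-4) * sh (jc k) l"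
proof (cases l)
  case 0 then show ?thesis by (simp add: th_def sh_def power2_eq_square)
next
  case (Suc m)
  have f1: "fact (k + Suc m) = (real (k+m) + 1) * fact (k+m)" by (simp add: algebra_simps)
  have f2: "fact (Suc m) = (real m + 1) * (fact m :: real)" by simp
  have e: "real k + 2 * real (Suc m) = real k + 2 * (real m + 1)" by simp
  have "(-1::real)^(Suc m) = - ((-1)^m)" by simp
  then show ?thesis using Suc
    apply (simp only: th_def sh_def jc_def f1 f2 e)
    apply (subst alg_j[of "real m + 1" "real (k+m) + 1" "fact m" "fact (k+m)" "real k" "(-1)^m"])
    apply auto
    done
qed

lemma coef_gc: assumes "k \<ge> 1"
  shows "th k (th k (gc k)) l = real k ^ 2 * gc k l + (-4) * sh (gc k) l + 4 * th k (jc k) l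
      + (-4 / fact (k - 1)) * (if l = 0 then 1 else 0)"
proof (cases l)
  case 0
  obtain j where kj: "k = Suc j" using assms by (cases k) auto
  have fj: "(fact j :: real) > 0" by simp
  have "fact j + fact j * real j > 0" using fj by (simp add: add_pos_nonneg)
  then have "real k / fact k = 1 / fact (k - 1)" unfolding kj using fj by (simp add: field_simps)
  then have "4 * (real k * (1 / fact k)) = 4 / (fact (k - 1) :: real)" by simp
  then show ?thesis using 0 by (simp add: th_def sh_def jc_def power2_eq_square)
next
  case (Suc m)
  have f1: "fact (k + Suc m) = (real (k+m) + 1) * fact (k+m)" by (simp add: algebra_simps)
  have f2: "fact (Suc m) = (real m + 1) * (fact m :: real)" by simp
  have d1: "Digamma (real (Suc m) + 1) = Digamma (real m + 1) + 1 / (real m + 1)" by (rule Digamma_step)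
  have d2: "Digamma (real (k + Suc m) + 1) = Digamma (real (k+m) + 1) + 1 / (real (k+m) + 1)"
    using Digamma_step[of "k+m"] by simp
  have e: "real k + 2 * real (Suc m) = real k + 2 * (real m + 1)" by simp
  have "(-1::real)^(Suc m) = - ((-1)^m)" by simp
  then show ?thesis using Suc
    apply (simp only: th_def sh_def gc_def jc_def f1 f2 d1 d2 e)
    apply (subst alg_g[of "real m + 1" "real (k+m) + 1" "fact m" "fact (k+m)" "real k" "(-1)^m"])
    apply simp_all
    done
qed



definition lc :: "nat \<Rightarrow> nat \<Rightarrow> real" where "lc k r = fact (k - r - 1) / fact r"
definition ex :: "nat \<Rightarrow> nat \<Rightarrow> real" where "ex k r = 2 * real r - real k"
definition Lp :: "nat \<Rightarrow> real \<Rightarrow> real" where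
  "Lp k z = (\<Sum>r<k. lc k r * (z/2) powr ex k r)"
definition Lp1 :: "nat \<Rightarrow> real \<Rightarrow> real" where
  "Lp1 k z = (\<Sum>r<k. lc k r * ex k r * (z/2) powr ex k r)"
definition Lp2 :: "nat \<Rightarrow> real \<Rightarrow> real" where
  "Lp2 k z = (\<Sum>r<k. lc k r * ex k r ^ 2 * (z/2) powr ex k r)"

lemma powr_half_deriv: assumes "z > 0"
  shows "((\<lambda>z. (z/2) powr p) has_real_derivative p * (z/2) powr p / z) (at z)"
proof -
  have "((\<lambda>z. (z/2) powr p) has_real_derivative p * (z/2) powr (p - 1) * (1/2)) (at z)"
    using assms by (auto intro!: derivative_eq_intros)
  moreover have "p * (z/2) powr (p - 1) * (1/2) = p * (z/2) powr p / z"
    using assms by (simp add: powr_diff field_simps)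
  ultimately show ?thesis by (rule DERIV_cong)
qed

lemma Lp_deriv: assumes "z > 0" shows "(Lp k has_real_derivative Lp1 k z / z) (at z)"
proof -
  have "((\<lambda>z. lc k r * (z/2) powr ex k r) has_real_derivative lc k r * ex k r * (z/2) powr ex k r / z) (at z)" for r
    using DERIV_cmult[OF powr_half_deriv[OF assms], of "lc k r" "ex k r"] by (simp add: mult.assoc)
  then have "((\<lambda>z. \<Sum>r<k. lc k r * (z/2) powr ex k r) has_real_derivative (\<Sum>r<k. lc k r * ex k r * (z/2) powr ex k r / z)) (at z)"
    by (intro DERIV_sum)
  then show ?thesis unfolding Lp_def[abs_def] Lp1_def sum_divide_distrib .
qed

lemma Lp1_deriv: assumes "z > 0" shows "(Lp1 k has_real_derivative Lp2 k z / z) (at z)"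
proof -
  have "((\<lambda>z. lc k r * ex k r * (z/2) powr ex k r) has_real_derivative lc k r * ex k r ^ 2 * (z/2) powr ex k r / z) (at z)" for r
    using DERIV_cmult[OF powr_half_deriv[OF assms], of "lc k r * ex k r" "ex k r"] by (simp add: mult.assoc power2_eq_square)
  then have "((\<lambda>z. \<Sum>r<k. lc k r * ex k r * (z/2) powr ex k r) has_real_derivative (\<Sum>r<k. lc k r * ex k r ^ 2 * (z/2) powr ex k r / z)) (at z)"
    by (intro DERIV_sum)
  then show ?thesis unfolding Lp1_def[abs_def] Lp2_def sum_divide_distrib .
qed

lemma lc_step: assumes "Suc q < k"
  shows "lc k (Suc q) * (ex k (Suc q) ^ 2 - real k ^ 2) = -4 * lc k q"
proof -
  define d where "d = k - q - 2"
  have kd: "k = q + 2 + d" using assms unfolding d_def by simp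
  have a: "k - Suc q - 1 = d" "k - q - 1 = Suc d" using kd by auto
  have l1: "lc k (Suc q) = fact d / ((real q + 1) * fact q)" unfolding lc_def kd by (simp add: algebra_simps)
  have l2: "lc k q = (real d + 1) * fact d / fact q" unfolding lc_def kd
    by (simp add: algebra_simps numeral_2_eq_2)
  have e: "ex k (Suc q) ^ 2 - real k ^ 2 = -4 * (real q + 1) * (real d + 1)"
    by (simp add: ex_def kd power2_eq_square algebra_simps)
  have g: "\<And>Q F D e :: real. Q > 0 \<Longrightarrow> F > 0 \<Longrightarrow> D / (Q * F) * (-4 * Q * e) = -4 * (e * D / F)"
    by (simp add: field_simps)
  show ?thesis unfolding l1 l2 e by (rule g) simp_all
qed

lemma Lp_identity: assumes "k \<ge> 1" "z > 0"
  shows "Lp2 k z - (real k ^ 2 - z^2) * Lp k z = 4 / fact (k - 1) * (z/2)^k"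
proof -
  define X where "X = z/2"
  have X: "X > 0" using assms by (simp add: X_def)
  have z2: "z^2 = 4 * X powr 2" using X by (simp add: X_def power2_eq_square)
  define T where "T r = (if r = 0 then 0 else 4 * lc k (r - 1) * X powr ex k r)" for r
  have trm: "lc k r * ex k r ^ 2 * X powr ex k r - (real k ^ 2 - z^2) * (lc k r * X powr ex k r) = T (Suc r) - T r"
    if "r < k" for r
  proof -
    have exs: "ex k (Suc r) = ex k r + 2" by (simp add: ex_def)
    have p: "z^2 * X powr ex k r = 4 * X powr ex k (Suc r)" unfolding z2 exs using X
      by (simp add: powr_add)
    have "lc k r * (ex k r ^ 2 - real k ^ 2) * X powr ex k r = - T r"
    proof (cases r)
      case 0 then show ?thesis by (simp add: T_def ex_def)
    next
      case (Suc q)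
      then show ?thesis using lc_step[of q k] that by (simp add: T_def)
    qed
    moreover have "T (Suc r) = 4 * lc k r * X powr ex k (Suc r)" by (simp add: T_def)
    ultimately show ?thesis using p by (simp add: algebra_simps)
  qed
  have "Lp2 k z - (real k ^ 2 - z^2) * Lp k z
      = (\<Sum>r<k. lc k r * ex k r ^ 2 * X powr ex k r - (real k ^ 2 - z^2) * (lc k r * X powr ex k r))"
    by (simp add: Lp_def Lp2_def X_def sum_subtractf sum_distrib_left)
  also have "\<dots> = (\<Sum>r<k. T (Suc r) - T r)" by (rule sum.cong) (auto simp: trm)
  also have "\<dots> = T k - T 0" by (rule sum_lessThan_telescope)
  also have "\<dots> = 4 * lc k (k - 1) * X powr ex k k" using assms by (simp add: T_def)
  also have "\<dots> = 4 / fact (k - 1) * X ^ k" using assms X by (simp add: lc_def ex_def powr_realpow)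
  finally show ?thesis by (simp add: X_def)
qed

definition dl :: "nat \<Rightarrow> real" where "dl l = (if l = 0 then 1 else 0)"

lemma dl_sums: "(\<lambda>l. dl l * w^l) sums 1"
proof -
  have "(\<lambda>l. dl l * w^l) = (\<lambda>l. if l = 0 then (\<lambda>_. 1::real) l else 0)" by (auto simp: fun_eq_iff dl_def)
  then show ?thesis using sums_single[of 0 "\<lambda>_. 1::real"] by simp
qed

lemma ES_dl: "ES dl" unfolding ES_def using dl_sums by (blast intro: sums_summable)

lemma PS_dl: "PS dl w = 1" unfolding PS_def using dl_sums by (rule sums_unique[symmetric])

lemma FJ: "Fk k (th k (th k (jc k))) z = (real k ^ 2 - z^2) * Fk k (jc k) z"
proof -
  have "th k (th k (jc k)) = (\<lambda>l. real k ^ 2 * jc k l + (-4) * sh (jc k) l)"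
    by (rule ext) (rule coef_jc)
  then have P: "PS (th k (th k (jc k))) w = real k ^ 2 * PS (jc k) w + (-4) * (w * PS (jc k) w)" for w
    by (simp only: PS_add[OF ES_scale[OF ES_jc] ES_scale[OF ES_sh[OF ES_jc]]] PS_scale[OF ES_jc] PS_scale[OF ES_sh[OF ES_jc]] PS_sh[OF ES_jc])
  show ?thesis unfolding Fk_def P by (simp add: algebra_simps)
qed

lemma FG: assumes "k \<ge> 1"
  shows "Fk k (th k (th k (gc k))) z - (real k ^ 2 - z^2) * Fk k (gc k) z + 4 / fact (k - 1) * (z/2)^k
     = 4 * Fk k (th k (jc k)) z"
proof -
  have "th k (th k (gc k)) = (\<lambda>l. (real k ^ 2 * gc k l + (-4) * sh (gc k) l) + (4 * th k (jc k) l
      + (-4 / fact (k - 1)) * dl l))"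
    by (rule ext) (simp add: coef_gc[OF assms] dl_def)
  then have P: "PS (th k (th k (gc k))) w = (real k ^ 2 * PS (gc k) w + (-4) * (w * PS (gc k) w))
      + (4 * PS (th k (jc k)) w + (-4 / fact (k - 1)) * 1)" for w
    by (simp only: PS_add[OF ES_add[OF ES_scale[OF ES_gc] ES_scale[OF ES_sh[OF ES_gc]]] ES_add[OF ES_scale[OF ES_th[OF ES_jc]] ES_scale[OF ES_dl]]]
       PS_add[OF ES_scale[OF ES_gc] ES_scale[OF ES_sh[OF ES_gc]]] PS_add[OF ES_scale[OF ES_th[OF ES_jc]] ES_scale[OF ES_dl]]
       PS_scale[OF ES_gc] PS_scale[OF ES_sh[OF ES_gc]] PS_scale[OF ES_th[OF ES_jc]] PS_scale[OF ES_dl] PS_sh[OF ES_gc] PS_dl)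
  show ?thesis unfolding Fk_def P by (simp add: algebra_simps)
qed

definition Yf :: "nat \<Rightarrow> real \<Rightarrow> real" where
  "Yf k z = 2/pi * ln (z/2) * Fk k (jc k) z - Lp k z / pi - Fk k (gc k) z / pi"
definition Vf :: "nat \<Rightarrow> real \<Rightarrow> real" where
  "Vf k z = 2/pi * (Fk k (jc k) z + ln (z/2) * Fk k (th k (jc k)) z) - Lp1 k z / pi - Fk k (th k (gc k)) z / pi"

lemma Y_deriv: assumes "z > 0" shows "(Yf k has_real_derivative Vf k z / z) (at z)"
proof -
  note d = Fk_deriv'[OF ES_jc assms] Fk_deriv'[OF ES_gc assms] Lp_deriv[OF assms]
  have "((\<lambda>z. 2/pi * ln (z/2) * Fk k (jc k) z - Lp k z / pi - Fk k (gc k) z / pi) has_real_derivative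
     2/pi * (1/z) * Fk k (jc k) z + 2/pi * ln (z/2) * (Fk k (th k (jc k)) z / z) - (Lp1 k z / z) / pi - (Fk k (th k (gc k)) z / z) / pi) (at z)"
    using assms pi_gt_zero by (auto intro!: derivative_eq_intros d simp: field_simps)
  moreover have "2/pi * (1/z) * Fk k (jc k) z + 2/pi * ln (z/2) * (Fk k (th k (jc k)) z / z) - (Lp1 k z / z) / pi - (Fk k (th k (gc k)) z / z) / pi = Vf k z / z"
    using assms pi_gt_zero by (simp add: Vf_def field_simps)
  ultimately show ?thesis unfolding Yf_def[abs_def] by (rule DERIV_cong)
qed

lemma V_deriv: assumes "k \<ge> 1" "z > 0" shows "(Vf k has_real_derivative (real k ^ 2 - z^2) * Yf k z / z) (at z)"
proof -
  note d = Fk_deriv'[OF ES_jc assms(2)] Fk_deriv'[OF ES_th[OF ES_jc] assms(2)] Fk_deriv'[OF ES_th[OF ES_gc] assms(2)] Lp1_deriv[OF assms(2)]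
  have "(Vf k has_real_derivative
     2/pi * (Fk k (th k (jc k)) z / z + ((1/z) * Fk k (th k (jc k)) z + ln (z/2) * (Fk k (th k (th k (jc k))) z / z))) - (Lp2 k z / z) / pi - (Fk k (th k (th k (gc k))) z / z) / pi) (at z)"
    unfolding Vf_def[abs_def] using assms by (auto intro!: derivative_eq_intros d)
  moreover have "2/pi * (Fk k (th k (jc k)) z / z + ((1/z) * Fk k (th k (jc k)) z + ln (z/2) * (Fk k (th k (th k (jc k))) z / z))) - (Lp2 k z / z) / pi - (Fk k (th k (th k (gc k))) z / z) / pi
     = (real k ^ 2 - z^2) * Yf k z / z"
  proof -
    have L: "Lp2 k z = (real k ^ 2 - z^2) * Lp k z + 4 / fact (k - 1) * (z/2)^k"
      using Lp_identity[OF assms] by simp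
    have G: "Fk k (th k (th k (gc k))) z = (real k ^ 2 - z^2) * Fk k (gc k) z - 4 / fact (k - 1) * (z/2)^k + 4 * Fk k (th k (jc k)) z"
      using FG[OF assms(1), of z] by simp
    show ?thesis unfolding L G FJ Yf_def using assms by (simp add: field_simps)
  qed
  ultimately show ?thesis by (rule DERIV_cong)
qed



lemma dirichlet_bv:
  fixes a b :: "nat \<Rightarrow> real"
  assumes a0: "a \<longlonglongrightarrow> 0" and bv: "summable (\<lambda>m. \<bar>a (Suc m) - a m\<bar>)"
    and bnd: "\<And>N. \<bar>\<Sum>m<N. b m\<bar> \<le> K"
  shows "summable (\<lambda>m. a m * b m)"
proof -
  define B where "B N = (\<Sum>m<N. b m)" for N
  have abel: "(\<Sum>m<N. a m * b m) = a N * B N - (\<Sum>m<N. (a (Suc m) - a m) * B (Suc m))" for N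
    by (induction N) (simp_all add: B_def algebra_simps)
  have s2: "summable (\<lambda>m. (a (Suc m) - a m) * B (Suc m))"
  proof (rule summable_comparison_test'[OF summable_mult[OF bv, of K]])
    fix m :: nat
    show "norm ((a (Suc m) - a m) * B (Suc m)) \<le> K * \<bar>a (Suc m) - a m\<bar>"
      using mult_left_mono[OF bnd[of "Suc m"] abs_ge_zero[of "a (Suc m) - a m"]]
      by (simp add: abs_mult B_def mult.commute)
  qed
  have t0: "(\<lambda>N. K * \<bar>a N\<bar>) \<longlonglongrightarrow> 0"
    using tendsto_mult_right_zero[OF tendsto_rabs_zero[OF a0], of K] by simp
  have t1: "(\<lambda>N. a N * B N) \<longlonglongrightarrow> 0"
  proof (rule Lim_null_comparison[OF _ t0])
    show "\<forall>\<^sub>F N in sequentially. norm (a N * B N) \<le> K * \<bar>a N\<bar>"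
      using mult_left_mono[OF bnd abs_ge_zero] by (auto simp: abs_mult B_def mult.commute)
  qed
  have "(\<lambda>N. a N * B N - (\<Sum>m<N. (a (Suc m) - a m) * B (Suc m))) \<longlonglongrightarrow> 0 - (\<Sum>m. (a (Suc m) - a m) * B (Suc m))"
    by (intro tendsto_diff t1 summable_LIMSEQ s2)
  then have "(\<lambda>m. a m * b m) sums (0 - (\<Sum>m. (a (Suc m) - a m) * B (Suc m)))"
    unfolding sums_def abel .
  then show ?thesis by (rule sums_summable)
qed

lemma cos_sum_bound:
  fixes x :: real assumes "0 < x" "x < 1"
  shows "\<bar>\<Sum>m<N. cos (2*pi*real (Suc m)*x)\<bar> \<le> 1 / sin (pi*x)"
proof -
  have sp: "sin (pi*x) > 0" using assms by (intro sin_gt_zero) auto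
  define f where "f m = sin (pi * (2 * real m + 1) * x)" for m
  have id: "\<And>a c :: real. sin (a + c) - sin (a - c) = 2 * cos a * sin c" by (simp add: sin_add sin_diff)
  have step: "2 * sin (pi*x) * cos (2*pi*real (Suc m)*x) = f (Suc m) - f m" for m
  proof -
    have "f (Suc m) = sin (2*pi*real (Suc m)*x + pi*x)" unfolding f_def by (simp add: algebra_simps)
    moreover have "f m = sin (2*pi*real (Suc m)*x - pi*x)" unfolding f_def by (simp add: algebra_simps)
    ultimately show ?thesis using id[of "2*pi*real (Suc m)*x" "pi*x"] by simp
  qed
  have "2 * sin (pi*x) * (\<Sum>m<N. cos (2*pi*real (Suc m)*x)) = (\<Sum>m<N. f (Suc m) - f m)"
    unfolding sum_distrib_left by (rule sum.cong[OF refl step])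
  also have "\<dots> = f N - f 0" by (rule sum_lessThan_telescope)
  finally have e: "2 * sin (pi*x) * (\<Sum>m<N. cos (2*pi*real (Suc m)*x)) = f N - f 0" .
  have "\<bar>f N - f 0\<bar> \<le> 2" unfolding f_def
    using abs_sin_le_one[of "pi * (2 * real N + 1) * x"] abs_sin_le_one[of "pi * (2 * real 0 + 1) * x"] by linarith
  then have "2 * sin (pi*x) * \<bar>\<Sum>m<N. cos (2*pi*real (Suc m)*x)\<bar> \<le> 2"
    using e sp by (simp add: abs_mult)
  then show ?thesis using sp by (simp add: field_simps)
qed



lemma bessel_ode_summable:
  fixes Y V :: "real \<Rightarrow> real" and K x :: real
  assumes K: "K \<ge> 1" and x: "0 < x" "x < 1"
   and dY: "\<And>t. t > 0 \<Longrightarrow> (Y has_real_derivative V t / t) (at t)"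
   and dV: "\<And>t. t > 0 \<Longrightarrow> (V has_real_derivative (K - t^2) * Y t / t) (at t)"
  shows "summable (\<lambda>m. Y (4*pi*real (Suc m)) * cos (2*pi*real (Suc m)*x))"
proof -
  define \<nu> where "\<nu> = K - 1/4"
  have nu: "\<nu> > 0" using K by (simp add: \<nu>_def)
  define u where "u t = sqrt t * Y t" for t
  define U where "U t = (Y t / 2 + V t) / sqrt t" for t
  have du: "(u has_real_derivative U t) (at t)" if t: "t > 0" for t
  proof -
    have st: "sqrt t > 0" "sqrt t * sqrt t = t" using t by auto
    have "((\<lambda>t. sqrt t * Y t) has_real_derivative inverse (sqrt t) / 2 * Y t + V t / t * sqrt t) (at t)"
      by (rule DERIV_mult[OF DERIV_real_sqrt[OF t] dY[OF t]])
    moreover have "inverse (sqrt t) / 2 * Y t + V t / t * sqrt t = U t"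
      unfolding U_def using st by (simp add: field_simps)
    ultimately show ?thesis unfolding u_def[abs_def] by (rule DERIV_cong)
  qed
  have dU: "(U has_real_derivative (\<nu> / t^2 - 1) * u t) (at t)" if t: "t > 0" for t
  proof -
    have st: "sqrt t > 0" using t by auto
    have d1: "((\<lambda>t. Y t / 2 + V t) has_real_derivative V t / t / 2 + (K - t^2) * Y t / t) (at t)"
      by (rule DERIV_add[OF DERIV_cdivide[OF dY[OF t]] dV[OF t]])
    have "(U has_real_derivative ((V t / t / 2 + (K - t^2) * Y t / t) * sqrt t - (Y t / 2 + V t) * (inverse (sqrt t) / 2)) / (sqrt t * sqrt t)) (at t)"
      unfolding U_def[abs_def] by (rule DERIV_divide[OF d1 DERIV_real_sqrt[OF t]]) (use st in simp)
    moreover have "((V t / t / 2 + (K - t^2) * Y t / t) * sqrt t - (Y t / 2 + V t) * (inverse (sqrt t) / 2)) / (sqrt t * sqrt t)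
        = (\<nu> / t^2 - 1) * u t"
    proof -
      obtain s where s: "s > 0" "sqrt t = s" "t = s * s" using st t by (metis real_sqrt_mult_self abs_of_pos)
      have "((V t / (s * s) / 2 + (K - (s * s)^2) * Y t / (s * s)) * s - (Y t / 2 + V t) * (inverse s / 2)) / (s * s)
        = (\<nu> / (s * s)^2 - 1) * (s * Y t)"
        using s(1) by (simp add: \<nu>_def field_simps power2_eq_square)
      then show ?thesis unfolding u_def s(2) by (simp only: s(3)[symmetric])
    qed
    ultimately show ?thesis by (rule DERIV_cong)
  qed
  define E where "E t = (u t ^ 2 + U t ^ 2) * exp (\<nu> / t)" for t
  have dE: "(E has_real_derivative - (\<nu> * exp (\<nu> / t) * (u t - U t)^2 / t^2)) (at t)" if t: "t > 0" for t
  proof -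
    have "(E has_real_derivative (2 * u t * U t + 2 * U t * ((\<nu> / t^2 - 1) * u t)) * exp (\<nu> / t)
        + (u t ^ 2 + U t ^ 2) * (exp (\<nu> / t) * (- \<nu> / t^2))) (at t)"
      unfolding E_def[abs_def] using t
      by (auto intro!: derivative_eq_intros du dU simp: power2_eq_square field_simps)
    moreover have "(2 * u t * U t + 2 * U t * ((\<nu> / t^2 - 1) * u t)) * exp (\<nu> / t)
        + (u t ^ 2 + U t ^ 2) * (exp (\<nu> / t) * (- \<nu> / t^2)) = - (\<nu> * exp (\<nu> / t) * (u t - U t)^2 / t^2)"
      using t by (simp add: field_simps power2_eq_square)
    ultimately show ?thesis by (rule DERIV_cong)
  qed
  define B where "B = sqrt (E 1)"
  have bnd: "\<bar>u t\<bar> \<le> B \<and> \<bar>U t\<bar> \<le> B" if t: "t \<ge> 1" for t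
  proof -
    have "E t \<le> E 1"
    proof (rule DERIV_nonpos_imp_nonincreasing[OF t])
      fix y assume y: "1 \<le> y" "y \<le> t"
      have "0 \<le> \<nu> * exp (\<nu> / y) * (u y - U y)^2 / y^2" using nu by simp
      then show "\<exists>d. DERIV E y :> d \<and> d \<le> 0" using dE[of y] y by (intro exI[of _ "- (\<nu> * exp (\<nu> / y) * (u y - U y)^2 / y^2)"]) auto
    qed
    moreover have "u t ^ 2 + U t ^ 2 \<le> E t"
    proof -
      have "1 \<le> exp (\<nu> / t)" using nu t by simp
      then have "(u t ^ 2 + U t ^ 2) * 1 \<le> (u t ^ 2 + U t ^ 2) * exp (\<nu> / t)"
        by (intro mult_left_mono) auto
      then show ?thesis by (simp add: E_def)
    qed
    ultimately have e: "u t ^ 2 + U t ^ 2 \<le> E 1" by linarith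
    have "\<bar>u t\<bar> = sqrt (u t ^ 2)" by simp
    also have "\<dots> \<le> B" unfolding B_def using e zero_le_power2[of "U t"] by (intro real_sqrt_le_mono) linarith
    finally have 1: "\<bar>u t\<bar> \<le> B" .
    have "\<bar>U t\<bar> = sqrt (U t ^ 2)" by simp
    also have "\<dots> \<le> B" unfolding B_def using e zero_le_power2[of "u t"] by (intro real_sqrt_le_mono) linarith
    finally show ?thesis using 1 by simp
  qed
  define b where "b t = u t * cos t - U t * sin t" for t
  have db: "(b has_real_derivative - (\<nu> * u t * sin t / t^2)) (at t)" if t: "t > 0" for t
    unfolding b_def[abs_def] using t
    by (auto intro!: derivative_eq_intros du dU simp: field_simps power2_eq_square)
  have bb: "\<bar>b t\<bar> \<le> 2 * B" if t: "t \<ge> 1" for t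
  proof -
    have "\<bar>u t * cos t\<bar> \<le> \<bar>u t\<bar>" by (simp add: abs_mult mult_left_le)
    moreover have "\<bar>U t * sin t\<bar> \<le> \<bar>U t\<bar>" by (simp add: abs_mult mult_left_le)
    ultimately show ?thesis using bnd[OF t] unfolding b_def by linarith
  qed
  define \<phi> where "\<phi> t = b t / sqrt t" for t
  define C where "C = (\<nu> + 1) * B"
  define \<psi> where "\<psi> t = 2 * C / sqrt t" for t
  define D\<phi> where "D\<phi> t = (- (\<nu> * u t * sin t / t^2) * sqrt t - b t * (inverse (sqrt t) / 2)) / (sqrt t * sqrt t)" for t
  have d\<phi>: "(\<phi> has_real_derivative D\<phi> t) (at t)" if t: "t > 0" for t
    unfolding \<phi>_def[abs_def] D\<phi>_def using t by (intro DERIV_divide db DERIV_real_sqrt) auto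
  have d\<psi>: "(\<psi> has_real_derivative - (C / (t * sqrt t))) (at t)" if t: "t > 0" for t
  proof -
    have "(\<psi> has_real_derivative (0 * sqrt t - 2 * C * (inverse (sqrt t) / 2)) / (sqrt t * sqrt t)) (at t)"
      unfolding \<psi>_def[abs_def] using t by (intro DERIV_divide DERIV_const DERIV_real_sqrt) auto
    moreover have "(0 * sqrt t - 2 * C * (inverse (sqrt t) / 2)) / (sqrt t * sqrt t) = - (C / (t * sqrt t))"
      using t by (simp add: field_simps)
    ultimately show ?thesis by (rule DERIV_cong)
  qed
  have B0: "B \<ge> 0" unfolding B_def E_def by simp
  have Dbound: "\<bar>D\<phi> t\<bar> \<le> C / (t * sqrt t)" if t: "t \<ge> 1" for t
  proof -
    obtain s where s: "s \<ge> 1" "sqrt t = s" "t = s * s" using t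
      by (metis abs_of_nonneg less_le_trans real_sqrt_ge_one real_sqrt_mult_self zero_less_one less_imp_le)
    have s0: "s > 0" using s by simp
    have e: "D\<phi> t = - (\<nu> * (u t * sin t)) / s^5 - b t / (2 * s^3)"
    proof -
      have alg: "\<And>A S Bt tt. tt = s * s \<Longrightarrow> (- (\<nu> * A * S / tt^2) * s - Bt * (inverse s / 2)) / (s * s)
          = - (\<nu> * (A * S)) / s^5 - Bt / (2 * s^3)"
        using s0 by (simp add: field_simps power2_eq_square eval_nat_numeral)
      show ?thesis unfolding D\<phi>_def s(2) by (rule alg[OF s(3)])
    qed
    have us: "\<bar>\<nu> * (u t * sin t)\<bar> \<le> \<nu> * B"
    proof -
      have "\<bar>u t * sin t\<bar> \<le> \<bar>u t\<bar>" by (simp add: abs_mult mult_left_le)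
      then have "\<bar>u t * sin t\<bar> \<le> B" using bnd[OF t] by linarith
      then show ?thesis using nu by (simp add: abs_mult mult_left_mono)
    qed
    have p35: "s^3 \<le> s^5" using s(1) by (intro power_increasing) auto
    have "\<bar>- (\<nu> * (u t * sin t)) / s^5\<bar> \<le> \<nu> * B / s^5"
      using us s0 by (simp add: abs_divide divide_right_mono)
    also have "\<dots> \<le> \<nu> * B / s^3"
      using p35 s0 nu B0 by (intro divide_left_mono) auto
    finally have 1: "\<bar>- (\<nu> * (u t * sin t)) / s^5\<bar> \<le> \<nu> * B / s^3" .
    have 2: "\<bar>b t / (2 * s^3)\<bar> \<le> B / s^3"
      using bb[OF t] s0 by (simp add: abs_divide field_simps)
    have "\<bar>D\<phi> t\<bar> \<le> \<nu> * B / s^3 + B / s^3" unfolding e using 1 2 by linarith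
    also have "\<dots> = C / (t * sqrt t)" unfolding C_def s(2) s(3) using s0 by (simp add: field_simps power3_eq_cube)
    finally show ?thesis .
  qed
  have var: "\<bar>\<phi> t - \<phi> a\<bar> \<le> \<psi> a - \<psi> t" if a: "1 \<le> a" "a \<le> t" for a t
  proof -
    have "\<phi> t + \<psi> t \<le> \<phi> a + \<psi> a"
    proof (rule DERIV_nonpos_imp_nonincreasing[OF a(2)])
      fix y assume y: "a \<le> y" "y \<le> t"
      then have y1: "y \<ge> 1" "y > 0" using a by auto
      show "\<exists>d. DERIV (\<lambda>t. \<phi> t + \<psi> t) y :> d \<and> d \<le> 0"
        using Dbound[OF y1(1)] DERIV_add[OF d\<phi>[OF y1(2)] d\<psi>[OF y1(2)]]
        by (intro exI[of _ "D\<phi> y + - (C / (y * sqrt y))"] conjI) auto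
    qed
    moreover have "\<phi> a - \<psi> a \<le> \<phi> t - \<psi> t"
    proof (rule DERIV_nonneg_imp_nondecreasing[OF a(2)])
      fix y assume y: "a \<le> y" "y \<le> t"
      then have y1: "y \<ge> 1" "y > 0" using a by auto
      show "\<exists>d. DERIV (\<lambda>t. \<phi> t - \<psi> t) y :> d \<and> d \<ge> 0"
        using Dbound[OF y1(1)] DERIV_diff[OF d\<phi>[OF y1(2)] d\<psi>[OF y1(2)]]
        by (intro exI[of _ "D\<phi> y - - (C / (y * sqrt y))"] conjI) auto
    qed
    ultimately show ?thesis by linarith
  qed
  define zm where "zm m = 4 * pi * real (Suc m)" for m
  have zm1: "zm m \<ge> 1" for m
  proof -
    have "1 \<le> 4 * pi" using pi_gt3 by simp
    also have "\<dots> \<le> 4 * pi * real (Suc m)" by simp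
    finally show ?thesis by (simp add: zm_def)
  qed
  have zmono: "zm m \<le> zm (Suc m)" for m by (simp add: zm_def)
  have aY: "Y (zm m) = \<phi> (zm m)" for m
  proof -
    have z: "zm m = 2 * real (2 * Suc m) * pi" by (simp add: zm_def)
    have "sin (zm m) = 0" "cos (zm m) = 1" unfolding z by (rule sin_2npi, rule cos_2npi)
    moreover have "sqrt (zm m) > 0" using zm1[of m] by simp
    ultimately show ?thesis by (simp add: \<phi>_def b_def u_def)
  qed
  define a where "a m = Y (zm m)" for m
  have g0: "(\<lambda>m. 1 / sqrt (4 * pi * real (Suc m))) \<longlonglongrightarrow> 0" by real_asymp
  have a0: "a \<longlonglongrightarrow> 0"
  proof (rule Lim_null_comparison[OF _ tendsto_mult_right_zero[OF g0, of "2 * B"]])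
    show "\<forall>\<^sub>F m in sequentially. norm (a m) \<le> 2 * B * (1 / sqrt (4 * pi * real (Suc m)))"
    proof (intro always_eventually allI)
      fix m
      have sp: "sqrt (zm m) > 0" using zm1[of m] by simp
      have "norm (a m) = \<bar>b (zm m)\<bar> / sqrt (zm m)" unfolding a_def aY \<phi>_def using sp by (simp add: abs_divide)
      also have "\<dots> \<le> 2 * B / sqrt (zm m)" using bb[OF zm1[of m]] sp by (intro divide_right_mono) auto
      finally show "norm (a m) \<le> 2 * B * (1 / sqrt (4 * pi * real (Suc m)))" by (simp add: zm_def)
    qed
  qed
  define f where "f m = \<psi> (zm m)" for m
  have f0: "f \<longlonglongrightarrow> 0"
  proof -
    have "f = (\<lambda>m. 2 * C * (1 / sqrt (4 * pi * real (Suc m))))" by (simp add: fun_eq_iff f_def \<psi>_def zm_def)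
    then show ?thesis using tendsto_mult_right_zero[OF g0, of "2 * C"] by simp
  qed
  have tel: "summable (\<lambda>m. - (f (Suc m) - f m))"
    using telescope_sums[OF f0] by (intro summable_minus) (rule sums_summable)
  have bv: "summable (\<lambda>m. \<bar>a (Suc m) - a m\<bar>)"
  proof (rule summable_comparison_test'[OF tel])
    fix m :: nat
    show "norm \<bar>a (Suc m) - a m\<bar> \<le> - (f (Suc m) - f m)"
      using var[OF zm1[of m] zmono[of m]] unfolding a_def aY f_def by simp
  qed
  have "summable (\<lambda>m. a m * cos (2*pi*real (Suc m)*x))"
    by (rule dirichlet_bv[OF a0 bv cos_sum_bound[OF x]])
  then show ?thesis by (simp add: a_def zm_def)
qed



lemma ES_bound: assumes "\<And>l. \<bar>c l\<bar> \<le> (real k + 2 * real l + 2) / fact l" shows "ES c"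
proof (rule ES_comp)
  show "ES (\<lambda>l. th k (\<lambda>l. inverse (fact l)) l + 2 * inverse (fact l))"
    unfolding th_def by (intro ES_add ES_scale ES_theta ES_exp)
  fix l
  have "\<bar>c l\<bar> \<le> (real k + 2 * real l + 2) / fact l" by (rule assms)
  also have "\<dots> = th k (\<lambda>l. inverse (fact l)) l + 2 * inverse (fact l)"
    by (simp add: th_def field_simps)
  also have "\<dots> \<le> \<bar>th k (\<lambda>l. inverse (fact l)) l + 2 * inverse (fact l)\<bar>" by simp
  finally show "\<bar>c l\<bar> \<le> \<bar>th k (\<lambda>l. inverse (fact l)) l + 2 * inverse (fact l)\<bar>" .
qed

lemma coef_bound: assumes "\<bar>a\<bar> \<le> real k + 2 * real l + 2"
  shows "\<bar>(-1)^l * a / (fact l * fact (k+l))\<bar> \<le> (real k + 2 * real l + 2) / (fact l :: real)"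
proof -
  have f1: "1 \<le> (fact (k+l) :: real)" by simp
  have "\<bar>(-1)^l * a / (fact l * fact (k+l))\<bar> = \<bar>a\<bar> / (fact l * fact (k+l))" by (simp add: abs_mult)
  also have "\<dots> \<le> (real k + 2 * real l + 2) / (fact l * fact (k+l))"
    by (intro divide_right_mono assms) simp
  also have "\<dots> \<le> (real k + 2 * real l + 2) / fact l"
    using f1 by (intro divide_left_mono) (auto intro!: mult_pos_pos)
  finally show ?thesis .
qed

definition pc :: "nat \<Rightarrow> nat \<Rightarrow> real" where
  "pc k l = (-1)^l * (Digamma (real (k+l) + 1) - Digamma (real l + 1)) / (fact l * fact (k+l))"
definition qc :: "nat \<Rightarrow> nat \<Rightarrow> real" where
  "qc k l = (-1)^l * (Digamma (real (k+l) + 1) + euler_mascheroni) / (fact l * fact (k+l))"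

lemma ES_pc: "ES (pc k)"
proof (rule ES_bound)
  fix l
  have a: "\<bar>Digamma (real l + 1)\<bar> \<le> real l + 1" by (rule Digamma_bound)
  have b: "\<bar>Digamma (real (k+l) + 1)\<bar> \<le> real k + real l + 1" using Digamma_bound[of "k+l"] by simp
  have "\<bar>Digamma (real (k+l) + 1) - Digamma (real l + 1)\<bar> \<le> \<bar>Digamma (real (k+l) + 1)\<bar> + \<bar>Digamma (real l + 1)\<bar>"
    by (rule abs_triangle_ineq4)
  then have "\<bar>Digamma (real (k+l) + 1) - Digamma (real l + 1)\<bar> \<le> real k + 2 * real l + 2" using a b by linarith
  then show "\<bar>pc k l\<bar> \<le> (real k + 2 * real l + 2) / fact l" unfolding pc_def by (rule coef_bound)
qed

lemma ES_qc: "ES (qc k)"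
proof (rule ES_bound)
  fix l
  have g: "euler_mascheroni \<le> (1::real)" "0 \<le> (euler_mascheroni::real)"
    using euler_mascheroni_less_13_over_22 euler_mascheroni_pos by auto
  have b: "\<bar>Digamma (real (k+l) + 1)\<bar> \<le> real k + real l + 1" using Digamma_bound[of "k+l"] by simp
  have "\<bar>Digamma (real (k+l) + 1) + euler_mascheroni\<bar> \<le> \<bar>Digamma (real (k+l) + 1)\<bar> + \<bar>euler_mascheroni\<bar>"
    by (rule abs_triangle_ineq)
  then have "\<bar>Digamma (real (k+l) + 1) + euler_mascheroni\<bar> \<le> real k + 2 * real l + 2" using g b by simp
  then show "\<bar>qc k l\<bar> \<le> (real k + 2 * real l + 2) / fact l" unfolding qc_def by (rule coef_bound)
qed

lemma series_sums: assumes "ES c"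
  shows "(\<lambda>l. c l * (z/2)^(k+2*l)) sums Fk k c z"
proof -
  have "(\<lambda>l. (z/2)^k * (c l * (z^2/4)^l)) sums ((z/2)^k * PS c (z^2/4))"
    using assms unfolding ES_def PS_def by (intro sums_mult summable_sums) auto
  moreover have "(z/2)^k * (c l * (z^2/4)^l) = c l * (z/2)^(k+2*l)" for l
    by (simp add: power_add power_mult power2_eq_square power_mult_distrib)
  ultimately show ?thesis by (simp add: Fk_def)
qed

lemma besselJ_Fk: "besselJ k z = Fk k (jc k) z"
proof -
  have "(\<lambda>l. (-1)^l * (z/2)^(k + 2*l) / (fact l * fact (k + l))) = (\<lambda>l. jc k l * (z/2)^(k+2*l))"
    by (simp add: fun_eq_iff jc_def)
  then show ?thesis unfolding besselJ_def using series_sums[OF ES_jc] by (simp add: sums_iff)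
qed

lemma besselY_Yf: assumes "z > 0" shows "besselY k z = Yf k z"
proof -
  have G: "(\<Sum>l. (-1)^l * (z/2)^(k + 2*l) * (Digamma (real l + 1) + Digamma (real (k + l) + 1)) / (fact l * fact (k + l)))
      = Fk k (gc k) z"
  proof -
    have "(\<lambda>l. (-1)^l * (z/2)^(k + 2*l) * (Digamma (real l + 1) + Digamma (real (k + l) + 1)) / (fact l * fact (k + l)))
       = (\<lambda>l. gc k l * (z/2)^(k+2*l))" by (simp add: fun_eq_iff gc_def)
    then show ?thesis using series_sums[OF ES_gc] by (simp add: sums_iff)
  qed
  have L: "(\<Sum>r<k. fact (k - r - 1) / fact r * (z/2) powi (2 * int r - int k)) = Lp k z"
    unfolding Lp_def
  proof (rule sum.cong[OF refl])
    fix r assume "r \<in> {..<k}"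
    have "(z/2) powr ex k r = (z/2) powr real_of_int (2 * int r - int k)" by (simp add: ex_def)
    also have "\<dots> = (z/2) powi (2 * int r - int k)" using assms by (intro powr_real_of_int') auto
    finally show "fact (k - r - 1) / fact r * (z/2) powi (2 * int r - int k) = lc k r * (z/2) powr ex k r"
      by (simp add: lc_def)
  qed
  show ?thesis unfolding besselY_def Yf_def G L besselJ_Fk by simp
qed

lemma fin_sum: fixes X :: real assumes "X > 0"
  shows "(\<Sum>r<2*n. fact (2*n - r - 1) / fact r * X powi (2 * int r - int (2*n)))
       - (\<Sum>r\<in>{(2*n + 1) div 2 ..< 2*n}. fact (2*n - r - 1) / fact r * X^(2*r - 2*n))
     = (\<Sum>r<n. fact (n + r) / fact (n - r - 1) * (1 / X^(2*r+2)))"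
proof -
  define f where "f r = fact (2*n - r - 1) / fact r * X powi (2 * int r - int (2*n))" for r
  have dv: "(2*n + 1) div 2 = n" by simp
  have un: "{..<2*n} = {..<n} \<union> {n..<2*n}" by auto
  have "(\<Sum>r<2*n. f r) = (\<Sum>r<n. f r) + (\<Sum>r\<in>{n..<2*n}. f r)"
    unfolding un by (rule sum.union_disjoint) auto
  moreover have "(\<Sum>r\<in>{n..<2*n}. f r) = (\<Sum>r\<in>{n..<2*n}. fact (2*n - r - 1) / fact r * X^(2*r - 2*n))"
  proof (rule sum.cong[OF refl])
    fix r assume r: "r \<in> {n..<2*n}"
    then have "2 * int r - int (2*n) = int (2*r - 2*n)" by auto
    then show "f r = fact (2*n - r - 1) / fact r * X^(2*r - 2*n)" unfolding f_def by (simp only: power_int_of_nat)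
  qed
  moreover have "(\<Sum>r<n. f r) = (\<Sum>i<n. f (n - Suc i))" by (rule sum.nat_diff_reindex[symmetric])
  moreover have "(\<Sum>i<n. f (n - Suc i)) = (\<Sum>r<n. fact (n + r) / fact (n - r - 1) * (1 / X^(2*r+2)))"
  proof (rule sum.cong[OF refl])
    fix i assume i: "i \<in> {..<n}"
    then have e1: "2 * n - (n - Suc i) - 1 = n + i" by auto
    have e2: "2 * int (n - Suc i) - int (2*n) = - int (2*i+2)" using i by auto
    show "f (n - Suc i) = fact (n + i) / fact (n - i - 1) * (1 / X^(2*i+2))"
    proof -
      have "X powi (2 * int (n - Suc i) - int (2*n)) = X powi (- int (2*i+2))" by (simp only: e2)
      also have "\<dots> = 1 / X^(2*i+2)" using power_int_minus[of X "int (2*i+2)"] by (simp only: power_int_of_nat inverse_eq_divide)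
      finally have p: "X powi (2 * int (n - Suc i) - int (2*n)) = 1 / X^(2*i+2)" .
      show ?thesis unfolding f_def e1 p by simp
    qed
  qed
  ultimately have "(\<Sum>r<2*n. f r) - (\<Sum>r\<in>{n..<2*n}. fact (2*n - r - 1) / fact r * X^(2*r - 2*n))
     = (\<Sum>r<n. fact (n + r) / fact (n - r - 1) * (1 / X^(2*r+2)))" by linarith
  then show ?thesis unfolding dv f_def .
qed



lemma termwise: fixes X :: real assumes n: "n \<ge> 1" and X: "X > 0"
  shows "2 * (euler_mascheroni + ln X) * besselJ (2*n) (2*X) + P_fun (2*n) (2*X) - 2 * Q_fun (2*n) (2*X)
     = pi * besselY (2*n) (2*X) + (\<Sum>r<n. fact (n + r) / fact (n - r - 1) * (1 / X^(2*r+2)))"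
proof -
  define k where "k = 2*n"
  define z where "z = 2*X"
  have zX: "z/2 = X" by (simp add: z_def)
  have sJ: "(\<lambda>l. jc k l * X^(k+2*l)) sums besselJ k z"
    using series_sums[OF ES_jc, of k z] unfolding besselJ_Fk zX .
  have sP: "(\<lambda>l. pc k l * X^(k+2*l)) sums Fk k (pc k) z"
    using series_sums[OF ES_pc, of k z] unfolding zX .
  have sQ: "(\<lambda>l. qc k l * X^(k+2*l)) sums Fk k (qc k) z"
    using series_sums[OF ES_qc, of k z] unfolding zX .
  have sG: "(\<lambda>l. gc k l * X^(k+2*l)) sums Fk k (gc k) z"
    using series_sums[OF ES_gc, of k z] unfolding zX .
  have P: "P_fun k z = - (\<Sum>r\<in>{(k + 1) div 2 ..< k}. fact (k - r - 1) / fact r * X^(2*r - k)) + Fk k (pc k) z"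
  proof -
    have "(\<lambda>l. (-1)^l * (z/2)^(k + 2*l) * (Digamma (real (k + l) + 1) - Digamma (real l + 1)) / (fact l * fact (k + l)))
        = (\<lambda>l. pc k l * X^(k+2*l))" by (simp add: fun_eq_iff pc_def zX)
    then show ?thesis unfolding P_fun_def using sP by (simp add: sums_iff zX)
  qed
  have Q: "Q_fun k z = Fk k (qc k) z"
  proof -
    have "(\<lambda>l. (-1)^l * (z/2)^(k + 2*l) * (Digamma (real (k + l) + 1) + euler_mascheroni) / (fact l * fact (k + l)))
        = (\<lambda>l. qc k l * X^(k+2*l))" by (simp add: fun_eq_iff qc_def zX)
    then show ?thesis unfolding Q_fun_def using sQ by (simp add: sums_iff)
  qed
  have Yd: "pi * besselY k z = 2 * ln X * besselJ k z
      - (\<Sum>r<k. fact (k - r - 1) / fact r * X powi (2 * int r - int k)) - Fk k (gc k) z"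
  proof -
    have "(\<lambda>l. (-1)^l * (z/2)^(k + 2*l) * (Digamma (real l + 1) + Digamma (real (k + l) + 1)) / (fact l * fact (k + l)))
        = (\<lambda>l. gc k l * X^(k+2*l))" by (simp add: fun_eq_iff gc_def zX)
    then have G: "(\<Sum>l. (-1)^l * X^(k + 2*l) * (Digamma (real l + 1) + Digamma (real (k + l) + 1)) / (fact l * fact (k + l)))
        = Fk k (gc k) z" using sG sums_unique unfolding zX by metis
    show ?thesis unfolding besselY_def zX G using pi_gt_zero by (simp add: field_simps)
  qed
  have comb: "2 * euler_mascheroni * besselJ k z + Fk k (pc k) z - 2 * Fk k (qc k) z = - Fk k (gc k) z"
  proof -
    have "(\<lambda>l. 2 * euler_mascheroni * (jc k l * X^(k+2*l)) + pc k l * X^(k+2*l) - 2 * (qc k l * X^(k+2*l)))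
        sums (2 * euler_mascheroni * besselJ k z + Fk k (pc k) z - 2 * Fk k (qc k) z)"
      by (intro sums_diff sums_add sums_mult sJ sP sQ)
    moreover have "(\<lambda>l. 2 * euler_mascheroni * (jc k l * X^(k+2*l)) + pc k l * X^(k+2*l) - 2 * (qc k l * X^(k+2*l)))
        = (\<lambda>l. - (gc k l * X^(k+2*l)))"
      by (rule ext) (simp add: jc_def pc_def qc_def gc_def field_simps)
    moreover have "(\<lambda>l. - (gc k l * X^(k+2*l))) sums (- Fk k (gc k) z)" by (intro sums_minus sG)
    ultimately show ?thesis using sums_unique2 by metis
  qed
  have F: "(\<Sum>r<k. fact (k - r - 1) / fact r * X powi (2 * int r - int k))
       - (\<Sum>r\<in>{(k + 1) div 2 ..< k}. fact (k - r - 1) / fact r * X^(2*r - k))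
     = (\<Sum>r<n. fact (n + r) / fact (n - r - 1) * (1 / X^(2*r+2)))"
    unfolding k_def by (rule fin_sum[OF X])
  have "2 * (euler_mascheroni + ln X) * besselJ k z + P_fun k z - 2 * Q_fun k z
     = pi * besselY k z + (\<Sum>r<n. fact (n + r) / fact (n - r - 1) * (1 / X^(2*r+2)))"
    unfolding P Q Yd F[symmetric] using comb by (simp add: algebra_simps)
  then show ?thesis unfolding k_def z_def .
qed

theorem lemma3p1:
  fixes n :: nat and x :: real
  assumes "n \<ge> 1" and "0 < x" and "x < 1"
  shows "summable (\<lambda>m. besselY (2*n) (4*pi*real (Suc m)) * cos (2*pi*real (Suc m)*x))
    \<and> summable (\<lambda>m. (2 * (euler_mascheroni + ln (2*pi*real (Suc m))) * besselJ (2*n) (4*pi*real (Suc m))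
          + P_fun (2*n) (4*pi*real (Suc m)) - 2 * Q_fun (2*n) (4*pi*real (Suc m))) * cos (2*pi*real (Suc m)*x))
    \<and> A_fun n x =
        (-1)^n * pi * (\<Sum>m. besselY (2*n) (4*pi*real (Suc m)) * cos (2*pi*real (Suc m)*x))
      + (-1)^(n+1) * (\<Sum>m. (2 * (euler_mascheroni + ln (2*pi*real (Suc m))) * besselJ (2*n) (4*pi*real (Suc m))
          + P_fun (2*n) (4*pi*real (Suc m)) - 2 * Q_fun (2*n) (4*pi*real (Suc m))) * cos (2*pi*real (Suc m)*x))"
proof -
  have k1: "2*n \<ge> 1" using assms by simp
  define Ys where "Ys m = besselY (2*n) (4*pi*real (Suc m)) * cos (2*pi*real (Suc m)*x)" for m
  define T where "T m = (2 * (euler_mascheroni + ln (2*pi*real (Suc m))) * besselJ (2*n) (4*pi*real (Suc m))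
          + P_fun (2*n) (4*pi*real (Suc m)) - 2 * Q_fun (2*n) (4*pi*real (Suc m))) * cos (2*pi*real (Suc m)*x)" for m
  define S where "S m = cos (2*pi*real (Suc m)*x) * (\<Sum>r<n. fact (n + r) / fact (n - r - 1) * (1 / (2*pi*real (Suc m))^(2*r+2)))" for m
  have Ysum: "summable Ys"
  proof -
    have r: "1 \<le> real (2*n)" using k1 by linarith
    have K: "real (2*n) ^ 2 \<ge> 1" by (rule one_le_power[OF r])
    have "summable (\<lambda>m. Yf (2*n) (4*pi*real (Suc m)) * cos (2*pi*real (Suc m)*x))"
      by (rule bessel_ode_summable[OF K assms(2,3) Y_deriv V_deriv[OF k1]])
    moreover have "Yf (2*n) (4*pi*real (Suc m)) = besselY (2*n) (4*pi*real (Suc m))" for m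
      by (rule besselY_Yf[symmetric]) simp
    ultimately show ?thesis unfolding Ys_def by simp
  qed
  have TS: "T m = pi * Ys m + S m" for m
  proof -
    have X: "2*pi*real (Suc m) > 0" by simp
    have z: "4*pi*real (Suc m) = 2 * (2*pi*real (Suc m))" by simp
    show ?thesis unfolding T_def Ys_def S_def z termwise[OF assms(1) X] by (simp add: algebra_simps)
  qed
  have Ssum: "summable S"
  proof -
    define c where "c = (\<Sum>r<n. fact (n + r) / fact (n - r - 1) :: real)"
    have inv: "summable (\<lambda>m. inverse (real (Suc m) ^ 2))"
      using inverse_power_summable[of 2, where 'a=real] by (subst summable_Suc_iff) simp
    show ?thesis
    proof (rule summable_comparison_test'[OF summable_mult[OF inv, of c]])
      fix m :: nat
      define X where "X = 2*pi*real (Suc m)"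
      have X1: "X \<ge> real (Suc m)" unfolding X_def using pi_gt3 by (simp add: mult_left_mono)
      have Xge: "real (Suc m) \<ge> 1" by simp
      have b: "1 / X^(2*r+2) \<le> inverse (real (Suc m) ^ 2)" for r
      proof -
        have "real (Suc m) ^ 2 \<le> X ^ 2" using X1 by (intro power_mono) auto
        also have "\<dots> \<le> X^(2*r+2)" using X1 Xge by (intro power_increasing) auto
        finally have "real (Suc m) ^ 2 \<le> X^(2*r+2)" .
        moreover have "0 < real (Suc m) ^ 2" by simp
        ultimately have "inverse (X^(2*r+2)) \<le> inverse (real (Suc m) ^ 2)" by (rule le_imp_inverse_le)
        then show ?thesis by (simp add: inverse_eq_divide)
      qed
      have "norm (S m) \<le> \<bar>\<Sum>r<n. fact (n + r) / fact (n - r - 1) * (1 / X^(2*r+2))\<bar>"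
        unfolding S_def X_def by (simp add: abs_mult mult_left_le_one_le)
      also have "\<dots> \<le> (\<Sum>r<n. \<bar>fact (n + r) / fact (n - r - 1) * (1 / X^(2*r+2))\<bar>)" by (rule sum_abs)
      also have "\<dots> \<le> (\<Sum>r<n. fact (n + r) / fact (n - r - 1) * inverse (real (Suc m) ^ 2))"
      proof (rule sum_mono)
        fix r assume "r \<in> {..<n}"
        have X0: "X > 0" using X1 by linarith
        have c: "0 \<le> (fact (n + r) / fact (n - r - 1) :: real)" by simp
        have nn: "0 \<le> fact (n + r) / fact (n - r - 1) * (1 / X^(2*r+2))" using c X0 by simp
        show "\<bar>fact (n + r) / fact (n - r - 1) * (1 / X^(2*r+2))\<bar> \<le> fact (n + r) / fact (n - r - 1) * inverse (real (Suc m) ^ 2)"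
          unfolding abs_of_nonneg[OF nn] by (rule mult_left_mono[OF b c])
      qed
      also have "\<dots> = c * inverse (real (Suc m) ^ 2)" by (simp add: c_def sum_distrib_right)
      finally show "norm (S m) \<le> c * inverse (real (Suc m) ^ 2)" .
    qed
  qed
  have Tsum: "summable T" unfolding TS by (intro summable_add summable_mult Ysum Ssum)
  have Tval: "(\<Sum>m. T m) = pi * (\<Sum>m. Ys m) + (\<Sum>m. S m)"
    unfolding TS by (simp add: suminf_add[OF summable_mult[OF Ysum] Ssum, symmetric] suminf_mult[OF Ysum])
  have A: "A_fun n x = (-1)^(n+1) * (\<Sum>m. S m)" unfolding A_fun_def S_def ..
  have "A_fun n x = (-1)^n * pi * (\<Sum>m. Ys m) + (-1)^(n+1) * (\<Sum>m. T m)"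
    unfolding A Tval by (simp add: algebra_simps)
  then show ?thesis using Ysum Tsum unfolding Ys_def T_def by blast
qed


end
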